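(* Let $2\le n_1<n_2$. Under exogenous participation and CRRA utility $u(w)=w^{1-\theta}/(1-\theta)$ with $\theta\in[0,1)$, the model structure $(F_0,D,\theta)$ is identified from the equilibrium bid distributions $G(\cdot\mid n_1)$ and $G(\cdot\mid n_2)$: any two such structures that induce the same pair $(G(\cdot\mid n_1),G(\cdot\mid n_2))$ coincide.
   Context: First-price auctions (no reserve price) with $n$ bidders, $n\in\{n_1,n_2\}$. Bidders' values are i.i.d. from $F_0$ on $[\underline v,\overline v]$ with continuous density $f_0>0$. Bidders have utility $u(w)=w^{1-\theta}/(1-\theta)$, $\theta\in[0,1)$, and maxmin expected utility over a weakly compact convex set $\Gamma$ of strictly increasing $C^1$ distributions on $[\underline v,\overline v]$ containing $F_0$, with least element $F^*\in\Gamma$ ($F^*\le F$ pointwise for all $F\in\Gamma$) having density $f^*>0$. Define $D(\gamma)=F^*(F_0^{-1}(\gamma))$ on $[0,1]$ ($D$ strictly increasing, $C^1$, $D(0)=0$, $D(1)=1$, $D(\gamma)\le\gamma$, $D'(0)>0$). Exogenous participation: $F_0$ and $\Gamma$ (hence $D$) do not depend on $n$. For $n$ bidders, a symmetric equilibrium is a strictly increasing differentiable $\beta_n$ such that for every value $v$, $x=v$ maximizes $u[v-\beta_n(x)]D[F_0(x)]^{n-1}$; $G(\cdot\mid n)$ is the distribution of $\beta_n(v)$ for $v\sim F_0$, with density $g(\cdot\mid n)$. *)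

theory Defs
  imports "HOL-Analysis.Analysis"
begin

definition crra :: "real \<Rightarrow> real \<Rightarrow> real" where
  "crra \<theta> w = (if 0 \<le> w then w powr (1 - \<theta>) / (1 - \<theta>)
                 else - ((- w) powr (1 - \<theta>)) / (1 - \<theta>))"

definition value_cdf :: "real \<Rightarrow> real \<Rightarrow> (real \<Rightarrow> real) \<Rightarrow> bool" where
  "value_cdf vlo vhi F0 \<longleftrightarrow>
     vlo < vhi \<and>
     (\<forall>v. v \<le> vlo \<longrightarrow> F0 v = 0) \<and>
     (\<forall>v. vhi \<le> v \<longrightarrow> F0 v = 1) \<and>
     (\<exists>f0. continuous_on {vlo..vhi} f0 \<and>
        (\<forall>v\<in>{vlo..vhi}. 0 < f0 v \<and> (F0 has_real_derivative f0 v) (at v within {vlo..vhi})))"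

text \<open>Ambiguity distortion D(gamma) = F*(F0^{-1}(gamma)) on [0,1].\<close>
definition distortion :: "(real \<Rightarrow> real) \<Rightarrow> bool" where
  "distortion D \<longleftrightarrow>
     strict_mono_on {0..1} D \<and> D 0 = 0 \<and> D 1 = 1 \<and>
     (\<forall>\<gamma>\<in>{0..1}. D \<gamma> \<le> \<gamma>) \<and>
     (\<exists>d. continuous_on {0..1} d \<and>
        (\<forall>\<gamma>\<in>{0..1}. (D has_real_derivative d \<gamma>) (at \<gamma> within {0..1})) \<and> 0 < d 0)"

definition model_structure :: "real \<Rightarrow> real \<Rightarrow> (real \<Rightarrow> real) \<Rightarrow> (real \<Rightarrow> real) \<Rightarrow> real \<Rightarrow> bool" where
  "model_structure vlo vhi F0 D \<theta> \<longleftrightarrow> value_cdf vlo vhi F0 \<and> distortion D \<and> 0 \<le> \<theta> \<and> \<theta> < 1"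

definition equilibrium ::
  "real \<Rightarrow> real \<Rightarrow> (real \<Rightarrow> real) \<Rightarrow> (real \<Rightarrow> real) \<Rightarrow> real \<Rightarrow> nat \<Rightarrow> (real \<Rightarrow> real) \<Rightarrow> bool" where
  "equilibrium vlo vhi F0 D \<theta> n \<beta> \<longleftrightarrow>
     strict_mono_on {vlo..vhi} \<beta> \<and>
     (\<forall>v\<in>{vlo..vhi}. \<beta> differentiable (at v within {vlo..vhi})) \<and>
     (\<forall>v\<in>{vlo..vhi}. \<forall>x\<in>{vlo..vhi}.
        crra \<theta> (v - \<beta> x) * (D (F0 x)) ^ (n - 1) \<le> crra \<theta> (v - \<beta> v) * (D (F0 v)) ^ (n - 1))"

definition bid_cdf :: "real \<Rightarrow> real \<Rightarrow> (real \<Rightarrow> real) \<Rightarrow> (real \<Rightarrow> real) \<Rightarrow> real \<Rightarrow> real" where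
  "bid_cdf vlo vhi F0 \<beta> b = measure (interval_measure F0) {v \<in> {vlo..vhi}. \<beta> v \<le> b}"

end

theory Submission
  imports Defs
begin

lemma within_Icc_at:
  fixes f :: "real \<Rightarrow> real"
  assumes "(f has_real_derivative l) (at x within {a..b})" "a < x" "x < b"
  shows "(f has_real_derivative l) (at x)"
proof -
  have "x \<in> interior {a..b}" using assms by simp
  then have "at x within {a..b} = at x" by (rule at_within_interior)
  then show ?thesis using assms(1) by simp
qed

lemma cont_from_der:
  fixes f g :: "real \<Rightarrow> real"
  assumes "\<forall>x\<in>{a..b}. (f has_real_derivative g x) (at x within {a..b})"
  shows "continuous_on {a..b} f"
  unfolding continuous_on_eq_continuous_within
  using assms DERIV_continuous by blast

lemma strict_from_der:
  fixes f g :: "real \<Rightarrow> real"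
  assumes "\<forall>x\<in>{a..b}. (f has_real_derivative g x) (at x within {a..b})"
    and "\<forall>x\<in>{a..b}. 0 < g x" and "a \<le> x" "x < y" "y \<le> b"
  shows "f x < f y"
proof -
  have c: "continuous_on {x..y} f"
    using cont_from_der[OF assms(1)] by (rule continuous_on_subset) (use assms in auto)
  have "\<exists>l z. x < z \<and> z < y \<and> DERIV f z :> l \<and> f y - f x = (y - x) * l"
  proof (rule MVT[OF assms(4) c])
    fix z assume "x < z" "z < y"
    then have "(f has_real_derivative g z) (at z)"
      using assms by (intro within_Icc_at[of f "g z" z a b]) auto
    then show "f differentiable (at z)" using real_differentiable_def by blast
  qed
  then obtain l z where z: "x < z" "z < y" "DERIV f z :> l" "f y - f x = (y - x) * l" by blast
  have "DERIV f z :> g z" using assms z by (intro within_Icc_at[of f "g z" z a b]) auto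
  then have "l = g z" using z DERIV_unique by blast
  moreover have "g z > 0" using assms z by auto
  ultimately have "(y - x) * l > 0" using z by simp
  then show ?thesis using z by linarith
qed


locale vstruct =
  fixes lo hi :: real and F f D d :: "real \<Rightarrow> real" and \<theta> :: real
  assumes lohi: "lo < hi"
    and F_lo: "\<forall>v. v \<le> lo \<longrightarrow> F v = 0"
    and F_hi: "\<forall>v. hi \<le> v \<longrightarrow> F v = 1"
    and f_pos: "\<forall>v\<in>{lo..hi}. 0 < f v"
    and F_der: "\<forall>v\<in>{lo..hi}. (F has_real_derivative f v) (at v within {lo..hi})"
    and D_mono: "strict_mono_on {0..1} D"
    and D0: "D 0 = 0" and D1: "D 1 = 1"
    and d_cont: "continuous_on {0..1} d"
    and D_der: "\<forall>\<gamma>\<in>{0..1}. (D has_real_derivative d \<gamma>) (at \<gamma> within {0..1})"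
    and d0: "0 < d 0"
    and th0: "0 \<le> \<theta>" and th1: "\<theta> < 1"
begin

lemma F_contI: "continuous_on {lo..hi} F"
  using cont_from_der F_der by blast

lemma F_strict: "lo \<le> x \<Longrightarrow> x < y \<Longrightarrow> y \<le> hi \<Longrightarrow> F x < F y"
  using strict_from_der[OF F_der f_pos] by blast

lemma F_lo': "F lo = 0" using F_lo by simp
lemma F_hi': "F hi = 1" using F_hi by simp

lemma F_le: "lo \<le> x \<Longrightarrow> x \<le> y \<Longrightarrow> y \<le> hi \<Longrightarrow> F x \<le> F y"
  using F_strict by (cases "x = y") (auto intro: less_imp_le)

lemma F_range: "v \<in> {lo..hi} \<Longrightarrow> F v \<in> {0..1}"
  using F_le[of lo v] F_le[of v hi] F_lo' F_hi' by auto

lemma F_mono: "x \<le> y \<Longrightarrow> F x \<le> F y"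
proof -
  assume xy: "x \<le> y"
  show "F x \<le> F y"
  proof (cases "x \<le> lo")
    case True
    then have "F x = 0" using F_lo by auto
    moreover have "0 \<le> F y"
    proof (cases "y \<le> hi")
      case True then show ?thesis using F_range[of y] F_lo \<open>x\<le>lo\<close> by (cases "y \<le> lo") auto
    next
      case False then show ?thesis using F_hi by auto
    qed
    ultimately show ?thesis by simp
  next
    case False
    show ?thesis
    proof (cases "y \<le> hi")
      case True then show ?thesis using F_le[of x y] False xy by auto
    next
      case False2: False
      then have "F y = 1" using F_hi by auto
      moreover have "F x \<le> 1" using F_range[of x] F_hi False by (cases "x \<le> hi") auto
      ultimately show ?thesis by simp
    qed
  qed
qed

lemma F_cont: "continuous_on UNIV F"
proof -
  have c1: "continuous_on {..lo} F"
    using continuous_on_cong[of "{..lo}" "{..lo}" F "\<lambda>_. 0"] F_lo by auto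
  have c3: "continuous_on {hi..} F"
    using continuous_on_cong[of "{hi..}" "{hi..}" F "\<lambda>_. 1"] F_hi by auto
  have c2: "continuous_on ({..lo} \<union> {lo..hi}) F"
    by (rule continuous_on_closed_Un) (auto simp: c1 F_contI)
  have "continuous_on ({..lo} \<union> {lo..hi} \<union> {hi..}) F"
    by (rule continuous_on_closed_Un[OF _ _ c2 c3]) auto
  moreover have "{..lo} \<union> {lo..hi} \<union> {hi..} = (UNIV :: real set)" by auto
  ultimately show ?thesis by simp
qed

lemma meas_Icc: "lo \<le> x \<Longrightarrow> emeasure (interval_measure F) {lo..x} = ennreal (F x)"
  using emeasure_interval_measure_Icc[of lo x F] F_mono F_cont F_lo' by simp

lemma fmeas_Icc: "lo \<le> x \<Longrightarrow> {lo..x} \<in> fmeasurable (interval_measure F)"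
  using meas_Icc by (auto simp: fmeasurable_def)

lemma measure_Icc: "lo \<le> x \<Longrightarrow> measure (interval_measure F) {lo..x} = F x"
  using meas_Icc F_mono[of lo x] F_lo' by (simp add: measure_def)

lemma F_img: "F ` {lo..hi} = {0..1}"
proof
  show "F ` {lo..hi} \<subseteq> {0..1}" using F_range by auto
  show "{0..1} \<subseteq> F ` {lo..hi}"
  proof
    fix t :: real assume "t \<in> {0..1}"
    then obtain x where "lo \<le> x" "x \<le> hi" "F x = t"
      using IVT'[of F lo t hi] F_lo' F_hi' lohi F_contI by auto
    then show "t \<in> F ` {lo..hi}" by auto
  qed
qed

lemma F_inj: "inj_on F {lo..hi}"
  unfolding inj_on_def
  by (metis F_strict atLeastAtMost_iff linorder_neqE_linordered_idom order_less_irrefl)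

definition V where "V = inv_into {lo..hi} F"

lemma V_in: "t \<in> {0..1} \<Longrightarrow> V t \<in> {lo..hi}"
  unfolding V_def using F_img by (metis inv_into_into)

lemma FV: "t \<in> {0..1} \<Longrightarrow> F (V t) = t"
  unfolding V_def using F_img by (metis f_inv_into_f)

lemma VF: "v \<in> {lo..hi} \<Longrightarrow> V (F v) = v"
  unfolding V_def using F_inj by (metis inv_into_f_f)

lemma V_cont: "continuous_on {0..1} V"
  using continuous_on_inv[OF F_contI compact_Icc, of V] VF F_img by auto

lemma V_int: "t \<in> {0<..<1} \<Longrightarrow> V t \<in> {lo<..<hi}"
proof -
  assume t: "t \<in> {0<..<1}"
  then have "V t \<in> {lo..hi}" "F (V t) = t" using V_in FV by auto
  moreover have "V t \<noteq> lo" using F_lo' \<open>F (V t) = t\<close> t by auto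
  moreover have "V t \<noteq> hi" using F_hi' \<open>F (V t) = t\<close> t by auto
  ultimately show ?thesis by auto
qed

lemma V0: "V 0 = lo" using VF[of lo] F_lo' lohi by auto
lemma V1: "V 1 = hi" using VF[of hi] F_hi' lohi by auto

lemma V_der: "t \<in> {0<..<1} \<Longrightarrow> DERIV V t :> inverse (f (V t))"
proof -
  assume t: "t \<in> {0<..<1}"
  have vi: "V t \<in> {lo<..<hi}" using V_int t by blast
  have "DERIV F (V t) :> f (V t)"
    using F_der vi by (intro within_Icc_at[of F _ _ lo hi]) auto
  moreover have "f (V t) \<noteq> 0"
  proof -
    have "V t \<in> {lo..hi}" using vi by auto
    then have "0 < f (V t)" using f_pos by blast
    then show ?thesis by simp
  qed
  moreover have "isCont V t"
  proof -
    have "t \<in> interior {0..1}" using t by simp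
    then show ?thesis using continuous_on_interior[OF V_cont] by blast
  qed
  ultimately show ?thesis
    using t FV by (intro DERIV_inverse_function[where a=0 and b=1]) auto
qed

lemma D_cont: "continuous_on {0..1} D"
  using cont_from_der D_der by blast

lemma D_der_at: "t \<in> {0<..<1} \<Longrightarrow> DERIV D t :> d t"
  using D_der by (intro within_Icc_at[of D _ _ 0 1]) auto

lemma D_pos: "0 < t \<Longrightarrow> t \<le> 1 \<Longrightarrow> 0 < D t"
  using D_mono D0 unfolding strict_mono_on_def by (metis atLeastAtMost_iff order_refl zero_le_one less_imp_le)

lemma d_pos_pt:
  assumes "0 \<le> a" "a < b" "b \<le> 1"
  shows "\<exists>z\<in>{a<..<b}. 0 < d z"
proof -
  have c: "continuous_on {a..b} D" using D_cont by (rule continuous_on_subset) (use assms in auto)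
  have "\<exists>l z. a < z \<and> z < b \<and> DERIV D z :> l \<and> D b - D a = (b - a) * l"
  proof (rule MVT[OF assms(2) c])
    fix z assume "a < z" "z < b"
    then have "DERIV D z :> d z" using assms by (intro D_der_at) auto
    then show "D differentiable (at z)" using real_differentiable_def by blast
  qed
  then obtain l z where z: "a < z" "z < b" "DERIV D z :> l" "D b - D a = (b - a) * l" by blast
  have "DERIV D z :> d z" using z assms by (intro D_der_at) auto
  then have "l = d z" using z DERIV_unique by blast
  moreover have "D a < D b" using D_mono assms unfolding strict_mono_on_def by auto
  ultimately have "0 < (b - a) * d z" using z by simp
  then have "0 < d z" using assms by (simp add: zero_less_mult_iff)
  then show ?thesis using z by auto
qed

end


lemma crra_pos: "0 < w \<Longrightarrow> \<theta> < 1 \<Longrightarrow> 0 < crra \<theta> w"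
  unfolding crra_def by simp

lemma crra_neg: "w < 0 \<Longrightarrow> \<theta> < 1 \<Longrightarrow> crra \<theta> w < 0"
  unfolding crra_def by simp

lemma crra_ge0: "0 \<le> crra \<theta> w \<Longrightarrow> \<theta> < 1 \<Longrightarrow> 0 \<le> w"
  using crra_neg[of w \<theta>] by linarith

lemma crra_gt0: "0 < crra \<theta> w \<Longrightarrow> \<theta> < 1 \<Longrightarrow> 0 < w"
proof (rule ccontr)
  assume a: "0 < crra \<theta> w" "\<theta> < 1" "\<not> 0 < w"
  show False
  proof (cases "w = 0")
    case True then show False using a unfolding crra_def by simp
  next
    case False then show False using a crra_neg[of w \<theta>] by linarith
  qed
qed

lemma crra_der: "0 < w \<Longrightarrow> \<theta> < 1 \<Longrightarrow> DERIV (crra \<theta>) w :> w powr (- \<theta>)"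
proof -
  assume w: "0 < w" and th: "\<theta> < 1"
  have "DERIV (\<lambda>x. x powr (1 - \<theta>) / (1 - \<theta>)) w :> ((1 - \<theta>) * w powr (1 - \<theta> - 1)) / (1 - \<theta>)"
    by (intro DERIV_cdivide has_real_derivative_powr w)
  moreover have "((1 - \<theta>) * w powr (1 - \<theta> - 1)) / (1 - \<theta>) = w powr (- \<theta>)"
    using th by simp
  ultimately have "DERIV (\<lambda>x. x powr (1 - \<theta>) / (1 - \<theta>)) w :> w powr (- \<theta>)" by simp
  then show ?thesis
    by (rule has_field_derivative_transform_within_open[where S="{0<..}"]) (use w in \<open>auto simp: crra_def\<close>)
qed

locale veq = vstruct +
  fixes n :: nat and \<beta> :: "real \<Rightarrow> real"
  assumes n2: "2 \<le> n" and eq: "equilibrium lo hi F D \<theta> n \<beta>"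
begin

lemma \<beta>_smono: "strict_mono_on {lo..hi} \<beta>" using eq unfolding equilibrium_def by blast
lemma \<beta>_diff: "v \<in> {lo..hi} \<Longrightarrow> \<beta> differentiable (at v within {lo..hi})"
  using eq unfolding equilibrium_def by blast
lemma IC: "v \<in> {lo..hi} \<Longrightarrow> x \<in> {lo..hi} \<Longrightarrow>
   crra \<theta> (v - \<beta> x) * (D (F x)) ^ (n - 1) \<le> crra \<theta> (v - \<beta> v) * (D (F v)) ^ (n - 1)"
  using eq unfolding equilibrium_def by blast

lemma \<beta>_cont: "continuous_on {lo..hi} \<beta>"
  unfolding continuous_on_eq_continuous_within
  using \<beta>_diff differentiable_imp_continuous_within by blast

lemma \<beta>_less: "lo \<le> x \<Longrightarrow> x < y \<Longrightarrow> y \<le> hi \<Longrightarrow> \<beta> x < \<beta> y"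
  using \<beta>_smono unfolding strict_mono_on_def by auto

lemma DFpos: "lo < v \<Longrightarrow> v \<le> hi \<Longrightarrow> 0 < D (F v) ^ (n - 1)"
proof -
  assume v: "lo < v" "v \<le> hi"
  have "F lo < F v" using F_strict[of lo v] v by auto
  moreover have "F v \<le> 1" using F_range[of v] v by auto
  ultimately have "0 < D (F v)" using D_pos F_lo' by auto
  then show ?thesis by simp
qed

lemma Dlo0: "D (F lo) ^ (n - 1) = 0"
  using F_lo' D0 n2 by simp

lemma \<beta>_le: "lo < v \<Longrightarrow> v \<le> hi \<Longrightarrow> \<beta> v \<le> v"
proof -
  assume v: "lo < v" "v \<le> hi"
  have "crra \<theta> (v - \<beta> lo) * (D (F lo)) ^ (n - 1) \<le> crra \<theta> (v - \<beta> v) * (D (F v)) ^ (n - 1)"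
    using IC[of v lo] v lohi by auto
  then have "0 \<le> crra \<theta> (v - \<beta> v) * (D (F v)) ^ (n - 1)" using Dlo0 by (metis mult_zero_right)
  then have "0 \<le> crra \<theta> (v - \<beta> v)" using DFpos[OF v] by (simp add: zero_le_mult_iff)
  then show ?thesis using crra_ge0 th1 by fastforce
qed

lemma \<beta>_lt: "lo < v \<Longrightarrow> v \<le> hi \<Longrightarrow> \<beta> v < v"
proof -
  assume v: "lo < v" "v \<le> hi"
  define x where "x = (lo + v) / 2"
  have x: "lo < x" "x < v" "x \<le> hi" using v unfolding x_def by auto
  have "\<beta> x < \<beta> v" using \<beta>_less[of x v] x v by auto
  then have "0 < v - \<beta> x" using \<beta>_le[OF v] by simp
  then have "0 < crra \<theta> (v - \<beta> x) * (D (F x)) ^ (n - 1)"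
    using crra_pos th1 DFpos[of x] x by (simp add: mult_pos_pos)
  also have "\<dots> \<le> crra \<theta> (v - \<beta> v) * (D (F v)) ^ (n - 1)"
    using IC[of v x] v x by auto
  finally have "0 < crra \<theta> (v - \<beta> v)" using DFpos[OF v] by (metis zero_less_mult_pos2)
  then show ?thesis using crra_gt0 th1 by fastforce
qed

definition B where "B t = \<beta> (V t)"

lemma FOC:
  assumes t: "t \<in> {0<..<1}"
  shows "\<exists>a. DERIV B t :> a \<and> (1 - \<theta>) * a * D t = real (n - 1) * (V t - B t) * d t"
proof -
  define v0 where "v0 = V t"
  have v0: "v0 \<in> {lo<..<hi}" using V_int t unfolding v0_def by blast
  define w0 where "w0 = v0 - \<beta> v0"
  have w0: "0 < w0" using \<beta>_lt[of v0] v0 unfolding w0_def by auto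
  obtain bd where "(\<beta> has_real_derivative bd) (at v0 within {lo..hi})"
    using \<beta>_diff[of v0] v0 real_differentiable_def by auto
  then have bd: "DERIV \<beta> v0 :> bd" using v0 by (intro within_Icc_at) auto
  define a where "a = bd * inverse (f v0)"
  have Bd: "DERIV B t :> a"
  proof -
    have bd': "DERIV \<beta> (V t) :> bd" using bd v0_def by simp
    have "DERIV (\<lambda>s. \<beta> (V s)) t :> bd * inverse (f (V t))"
      by (rule DERIV_chain2[OF bd' V_der[OF t]])
    then show ?thesis unfolding B_def[abs_def] a_def v0_def by simp
  qed
  have hd: "DERIV (\<lambda>s. v0 - B s) t :> 0 - a"
    by (intro DERIV_diff DERIV_const Bd)
  have cd: "DERIV (crra \<theta>) (v0 - B t) :> w0 powr (- \<theta>)"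
    using crra_der[OF w0 th1] unfolding w0_def B_def v0_def by simp
  have h: "DERIV (\<lambda>s. crra \<theta> (v0 - B s)) t :> w0 powr (- \<theta>) * (0 - a)"
    using DERIV_chain2[OF cd hd] .
  define m where "m = n - 1"
  have m1: "1 \<le> m" using n2 unfolding m_def by simp
  have p: "DERIV (\<lambda>s. D s ^ m) t :> real m * (d t * D t ^ (m - Suc 0))"
    using DERIV_power[OF D_der_at[OF t]] by simp
  have P: "DERIV (\<lambda>s. crra \<theta> (v0 - B s) * D s ^ m) t :>
      w0 powr (- \<theta>) * (0 - a) * D t ^ m + real m * (d t * D t ^ (m - Suc 0)) * crra \<theta> (v0 - B t)"
    using DERIV_mult[OF h p] .
  have "w0 powr (- \<theta>) * (0 - a) * D t ^ m + real m * (d t * D t ^ (m - Suc 0)) * crra \<theta> (v0 - B t) = 0"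
  proof (rule DERIV_local_max[OF P])
    show "0 < min t (1 - t)" using t by auto
    show "\<forall>y. \<bar>t - y\<bar> < min t (1 - t) \<longrightarrow> crra \<theta> (v0 - B y) * D y ^ m \<le> crra \<theta> (v0 - B t) * D t ^ m"
    proof (intro allI impI)
      fix y assume "\<bar>t - y\<bar> < min t (1 - t)"
      then have y: "y \<in> {0..1}" by auto
      have tt: "t \<in> {0..1}" using t by auto
      have "crra \<theta> (v0 - \<beta> (V y)) * (D (F (V y))) ^ (n - 1) \<le> crra \<theta> (v0 - \<beta> v0) * (D (F v0)) ^ (n - 1)"
        using IC[of v0 "V y"] v0 V_in[OF y] by auto
      then show "crra \<theta> (v0 - B y) * D y ^ m \<le> crra \<theta> (v0 - B t) * D t ^ m"
        using FV[OF y] FV[OF tt] unfolding B_def m_def v0_def by simp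
    qed
  qed
  moreover have "crra \<theta> (v0 - B t) = w0 * w0 powr (- \<theta>) / (1 - \<theta>)"
  proof -
    have "w0 powr (1 - \<theta>) = w0 powr 1 * w0 powr (- \<theta>)" using powr_add[of w0 1 "- \<theta>"] by simp
    then show ?thesis using w0 unfolding crra_def B_def v0_def w0_def by simp
  qed
  moreover have "D t ^ m = D t * D t ^ (m - Suc 0)"
  proof -
    obtain k where "m = Suc k" using m1 by (cases m) auto
    then show ?thesis by simp
  qed
  ultimately have E0: "w0 powr (- \<theta>) * (0 - a) * (D t * D t ^ (m - Suc 0)) + real m * (d t * D t ^ (m - Suc 0)) * (w0 * w0 powr (- \<theta>) / (1 - \<theta>)) = 0"
    by simp
  have E1: "w0 powr (- \<theta>) * D t ^ (m - Suc 0) * (real m * d t * w0 / (1 - \<theta>) - a * D t)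
     = w0 powr (- \<theta>) * (0 - a) * (D t * D t ^ (m - Suc 0)) + real m * (d t * D t ^ (m - Suc 0)) * (w0 * w0 powr (- \<theta>) / (1 - \<theta>))"
    by (simp add: algebra_simps)
  have E: "w0 powr (- \<theta>) * D t ^ (m - Suc 0) * (real m * d t * w0 / (1 - \<theta>) - a * D t) = 0"
    using E0 E1 by simp
  have "w0 powr (- \<theta>) * D t ^ (m - Suc 0) \<noteq> 0"
    using w0 D_pos[of t] t by auto
  then have "real m * d t * w0 / (1 - \<theta>) - a * D t = 0" using E mult_eq_0_iff by blast
  then have "(1 - \<theta>) * a * D t = real m * w0 * d t" using th1 by (simp add: field_simps)
  then show ?thesis using Bd unfolding m_def w0_def v0_def B_def by auto
qed

lemma VB_pos: "t \<in> {0<..<1} \<Longrightarrow> 0 < V t - B t"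
  using V_int[of t] \<beta>_lt[of "V t"] unfolding B_def by auto


lemma S_eq: "{v \<in> {lo..hi}. \<beta> v \<le> b} = {lo..hi} \<inter> \<beta> -` {..b}" by auto

lemma S_sets: "{v \<in> {lo..hi}. \<beta> v \<le> b} \<in> sets (interval_measure F)"
proof -
  have "closed ({lo..hi} \<inter> \<beta> -` {..b})"
    by (rule continuous_closed_preimage[OF \<beta>_cont closed_atLeastAtMost closed_atMost])
  then show ?thesis unfolding S_eq by (simp add: borel_closed)
qed

lemma G_lt:
  assumes t: "t \<in> {0<..<1}" and b: "b < B t"
  shows "bid_cdf lo hi F \<beta> b < t"
proof -
  define x0 where "x0 = V t"
  have x0: "x0 \<in> {lo<..<hi}" using V_int t unfolding x0_def by blast
  have "x0 \<in> {lo..hi}" using x0 by auto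
  then obtain \<delta> where \<delta>: "\<delta> > 0" "\<forall>y\<in>{lo..hi}. dist y x0 < \<delta> \<longrightarrow> dist (\<beta> y) (\<beta> x0) < \<beta> x0 - b"
    using \<beta>_cont b unfolding continuous_on_iff B_def x0_def by (metis diff_gt_0_iff_gt)
  define x where "x = max lo (x0 - \<delta>/2)"
  have xlo: "lo \<le> x" and xx0: "x < x0" using x0 \<delta> unfolding x_def by auto
  have sub: "{v \<in> {lo..hi}. \<beta> v \<le> b} \<subseteq> {lo..x}"
  proof
    fix v assume v: "v \<in> {v \<in> {lo..hi}. \<beta> v \<le> b}"
    have "v < x0"
    proof (rule ccontr)
      assume "\<not> v < x0"
      then have "\<beta> x0 \<le> \<beta> v" using \<beta>_less[of x0 v] x0 v by (cases "v = x0") auto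
      then show False using v b unfolding B_def x0_def by auto
    qed
    moreover have "\<not> dist v x0 < \<delta>"
    proof
      assume "dist v x0 < \<delta>"
      then have "dist (\<beta> v) (\<beta> x0) < \<beta> x0 - b" using \<delta> v by auto
      then show False using v by (auto simp: dist_real_def)
    qed
    ultimately show "v \<in> {lo..x}" using v unfolding x_def by (auto simp: dist_real_def)
  qed
  have "bid_cdf lo hi F \<beta> b \<le> measure (interval_measure F) {lo..x}"
    unfolding bid_cdf_def by (rule measure_mono_fmeasurable[OF sub S_sets fmeas_Icc[OF xlo]])
  also have "\<dots> = F x" using measure_Icc[OF xlo] .
  also have "\<dots> < F x0" using F_strict[OF xlo xx0] x0 by auto
  also have "F x0 = t" using FV t unfolding x0_def by auto
  finally show ?thesis .
qed

lemma G_gt: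
  assumes t: "t \<in> {0<..<1}" and b: "B t < b"
  shows "t < bid_cdf lo hi F \<beta> b"
proof -
  define x0 where "x0 = V t"
  have x0: "x0 \<in> {lo<..<hi}" using V_int t unfolding x0_def by blast
  have "x0 \<in> {lo..hi}" using x0 by auto
  then obtain \<delta> where \<delta>: "\<delta> > 0" "\<forall>y\<in>{lo..hi}. dist y x0 < \<delta> \<longrightarrow> dist (\<beta> y) (\<beta> x0) < b - \<beta> x0"
    using \<beta>_cont b unfolding continuous_on_iff B_def x0_def by (metis diff_gt_0_iff_gt)
  define x where "x = min hi (x0 + \<delta>/2)"
  have xlo: "lo \<le> x" and xx0: "x0 < x" and xhi: "x \<le> hi" using x0 \<delta> unfolding x_def by auto
  have sub: "{lo..x} \<subseteq> {v \<in> {lo..hi}. \<beta> v \<le> b}"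
  proof
    fix v assume v: "v \<in> {lo..x}"
    then have vI: "v \<in> {lo..hi}" using xhi by auto
    have "\<beta> v < b"
    proof (cases "v \<le> x0")
      case True
      then have "\<beta> v \<le> \<beta> x0" using \<beta>_less[of v x0] x0 v by (cases "v = x0") auto
      then show ?thesis using b unfolding B_def x0_def by auto
    next
      case False
      then have "dist v x0 < \<delta>" using v \<delta> unfolding x_def by (auto simp: dist_real_def)
      then have "dist (\<beta> v) (\<beta> x0) < b - \<beta> x0" using \<delta> vI by auto
      then show ?thesis by (auto simp: dist_real_def)
    qed
    then show "v \<in> {v \<in> {lo..hi}. \<beta> v \<le> b}" using vI by auto
  qed
  have fm: "{v \<in> {lo..hi}. \<beta> v \<le> b} \<in> fmeasurable (interval_measure F)"
    by (rule fmeasurableI2[OF fmeas_Icc[of hi]]) (use lohi S_sets in auto)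
  have "t = F x0" using FV t unfolding x0_def by auto
  also have "\<dots> < F x" using F_strict[OF _ xx0 xhi] x0 by auto
  also have "\<dots> = measure (interval_measure F) {lo..x}" using measure_Icc[OF xlo] by simp
  also have "\<dots> \<le> bid_cdf lo hi F \<beta> b"
    unfolding bid_cdf_def by (rule measure_mono_fmeasurable[OF sub _ fm]) simp
  finally show ?thesis .
qed

end


lemma alg_key:
  fixes m1 m2 a1 a2 k k' V V' B1 B2 :: real
  assumes "m1 > 0" "m2 > 0" "a1 * k = m1 * (V - B1)" "a2 * k = m2 * (V - B2)"
    "a1 * k' = m1 * (V' - B1)" "a2 * k' = m2 * (V' - B2)" "B1 \<noteq> B2"
  shows "V = V'"
proof -
  have e1: "V - B1 = k * (a1 / m1)" "V - B2 = k * (a2 / m2)"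
    "V' - B1 = k' * (a1 / m1)" "V' - B2 = k' * (a2 / m2)"
    using assms by (auto simp: field_simps)
  define X where "X = a1 / m1 - a2 / m2"
  have h1: "B2 - B1 = k * X" using e1(1,2) unfolding X_def by (simp add: algebra_simps)
  moreover have h2: "B2 - B1 = k' * X" using e1(3,4) unfolding X_def by (simp add: algebra_simps)
  ultimately have "(k - k') * X = 0" by (metis left_diff_distrib diff_self)
  moreover have "X \<noteq> 0"
    using h1 assms(7) by auto
  ultimately have "k = k'" by simp
  then show ?thesis using e1 by simp
qed

locale ident =
  A1: veq lo hi F f D d \<theta> n1 \<beta>1 + A2: veq lo hi F f D d \<theta> n2 \<beta>2 +
  C1: veq lo' hi' F' f' D' d' \<theta>' n1 \<gamma>1 + C2: veq lo' hi' F' f' D' d' \<theta>' n2 \<gamma>2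
  for lo hi F f D d \<theta> n1 \<beta>1 n2 \<beta>2 lo' hi' F' f' D' d' \<theta>' \<gamma>1 \<gamma>2 +
  assumes n12: "n1 < n2"
    and G1: "bid_cdf lo hi F \<beta>1 = bid_cdf lo' hi' F' \<gamma>1"
    and G2: "bid_cdf lo hi F \<beta>2 = bid_cdf lo' hi' F' \<gamma>2"
begin

lemma Bsame1: "t \<in> {0<..<1} \<Longrightarrow> A1.B t = C1.B t"
proof (rule ccontr)
  assume t: "t \<in> {0<..<1}" and ne: "A1.B t \<noteq> C1.B t"
  show False
  proof (cases "A1.B t < C1.B t")
    case True
    define c where "c = (A1.B t + C1.B t) / 2"
    have "t < bid_cdf lo hi F \<beta>1 c" using A1.G_gt[OF t] True unfolding c_def by simp
    moreover have "bid_cdf lo' hi' F' \<gamma>1 c < t" using C1.G_lt[OF t] True unfolding c_def by simp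
    ultimately show False using G1 by simp
  next
    case False
    then have lt: "C1.B t < A1.B t" using ne by simp
    define c where "c = (A1.B t + C1.B t) / 2"
    have "bid_cdf lo hi F \<beta>1 c < t" using A1.G_lt[OF t] lt unfolding c_def by simp
    moreover have "t < bid_cdf lo' hi' F' \<gamma>1 c" using C1.G_gt[OF t] lt unfolding c_def by simp
    ultimately show False using G1 by simp
  qed
qed

lemma Bsame2: "t \<in> {0<..<1} \<Longrightarrow> A2.B t = C2.B t"
proof (rule ccontr)
  assume t: "t \<in> {0<..<1}" and ne: "A2.B t \<noteq> C2.B t"
  show False
  proof (cases "A2.B t < C2.B t")
    case True
    define c where "c = (A2.B t + C2.B t) / 2"
    have "t < bid_cdf lo hi F \<beta>2 c" using A2.G_gt[OF t] True unfolding c_def by simp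
    moreover have "bid_cdf lo' hi' F' \<gamma>2 c < t" using C2.G_lt[OF t] True unfolding c_def by simp
    ultimately show False using G2 by simp
  next
    case False
    then have lt: "C2.B t < A2.B t" using ne by simp
    define c where "c = (A2.B t + C2.B t) / 2"
    have "bid_cdf lo hi F \<beta>2 c < t" using A2.G_lt[OF t] lt unfolding c_def by simp
    moreover have "t < bid_cdf lo' hi' F' \<gamma>2 c" using C2.G_gt[OF t] lt unfolding c_def by simp
    ultimately show False using G2 by simp
  qed
qed

lemma derC1:
  assumes t: "t \<in> {0<..<1}" and dd: "DERIV A1.B t :> a"
  shows "DERIV C1.B t :> a"
  using has_field_derivative_transform_within_open[OF dd, of "{0<..<1}" C1.B] t Bsame1 by auto

lemma derC2:
  assumes t: "t \<in> {0<..<1}" and dd: "DERIV A2.B t :> a"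
  shows "DERIV C2.B t :> a"
  using has_field_derivative_transform_within_open[OF dd, of "{0<..<1}" C2.B] t Bsame2 by auto


lemma Vsame_pt:
  assumes t: "t \<in> {0<..<1}" and dpos: "0 < d t" and ne: "A1.B t \<noteq> A2.B t"
  shows "A1.V t = C1.V t"
proof -
  obtain a1 where a1: "DERIV A1.B t :> a1" "(1 - \<theta>) * a1 * D t = real (n1 - 1) * (A1.V t - A1.B t) * d t"
    using A1.FOC[OF t] by blast
  obtain a2 where a2: "DERIV A2.B t :> a2" "(1 - \<theta>) * a2 * D t = real (n2 - 1) * (A1.V t - A2.B t) * d t"
    using A2.FOC[OF t] by blast
  obtain c1 where c1: "DERIV C1.B t :> c1" "(1 - \<theta>') * c1 * D' t = real (n1 - 1) * (C1.V t - C1.B t) * d' t"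
    using C1.FOC[OF t] by blast
  obtain c2 where c2: "DERIV C2.B t :> c2" "(1 - \<theta>') * c2 * D' t = real (n2 - 1) * (C1.V t - C2.B t) * d' t"
    using C2.FOC[OF t] by blast
  have "c1 = a1" using DERIV_unique[OF c1(1) derC1[OF t a1(1)]] .
  have "c2 = a2" using DERIV_unique[OF c2(1) derC2[OF t a2(1)]] .
  have m1: "0 < real (n1 - 1)" using A1.n2 by simp
  have m2: "0 < real (n2 - 1)" using A2.n2 by simp
  have Dp: "0 < D t" using A1.D_pos t by auto
  have Dp': "0 < D' t" using C1.D_pos t by auto
  have w1: "0 < A1.V t - A1.B t" using A1.VB_pos[OF t] .
  have w1': "0 < C1.V t - C1.B t" using C1.VB_pos[OF t] .
  have th: "0 < 1 - \<theta>" "0 < 1 - \<theta>'" using A1.th1 C1.th1 by auto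
  have "0 < real (n1 - 1) * (A1.V t - A1.B t) * d t" using m1 w1 dpos by simp
  then have "0 < (1 - \<theta>) * a1 * D t" using a1(2) by (simp only:)
  then have a1p: "0 < a1" using th Dp by (simp add: zero_less_mult_iff)
  then have "0 < (1 - \<theta>') * c1 * D' t" using \<open>c1 = a1\<close> th Dp' by simp
  then have "0 < real (n1 - 1) * (C1.V t - C1.B t) * d' t" using c1(2) \<open>c1 = a1\<close> by (simp only:)
  moreover have "0 < real (n1 - 1) * (C1.V t - C1.B t)" using m1 w1' by simp
  ultimately have dpos': "0 < d' t" using zero_less_mult_pos by blast
  have tok: "\<And>c a Dv m w dd. (0::real) < dd \<Longrightarrow> c * a * Dv = m * w * dd \<Longrightarrow> a * (c * Dv / dd) = m * w"
    by (simp add: field_simps)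
  show ?thesis
  proof (rule alg_key[OF m1 m2])
    show "a1 * ((1 - \<theta>) * D t / d t) = real (n1 - 1) * (A1.V t - A1.B t)"
      by (rule tok[OF dpos a1(2)])
    show "a2 * ((1 - \<theta>) * D t / d t) = real (n2 - 1) * (A1.V t - A2.B t)"
      using tok[OF dpos a2(2)] by simp
    show "a1 * ((1 - \<theta>') * D' t / d' t) = real (n1 - 1) * (C1.V t - A1.B t)"
      using tok[OF dpos' c1(2)] \<open>c1 = a1\<close> Bsame1[OF t] by simp
    show "a2 * ((1 - \<theta>') * D' t / d' t) = real (n2 - 1) * (C1.V t - A2.B t)"
      using tok[OF dpos' c2(2)] \<open>c2 = a2\<close> Bsame2[OF t] by simp
  qed (rule ne)
qed


lemma good_point:
  assumes ab: "0 \<le> a" "a < b" "b \<le> 1"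
  shows "\<exists>y\<in>{a<..<b}. 0 < d y \<and> A1.B y \<noteq> A2.B y"
proof -
  obtain z where z: "z \<in> {a<..<b}" "0 < d z" using A1.d_pos_pt[OF ab] by blast
  have zI: "z \<in> {0..1}" and zt: "z \<in> {0<..<1}" using z ab by auto
  obtain \<delta> where \<delta>: "\<delta> > 0" "\<forall>y\<in>{0..1}. dist y z < \<delta> \<longrightarrow> dist (d y) (d z) < d z"
    using A1.d_cont zI z(2) unfolding continuous_on_iff by metis
  show ?thesis
  proof (cases "A1.B z = A2.B z")
    case False then show ?thesis using z by auto
  next
    case True
    obtain a1 where a1: "DERIV A1.B z :> a1" "(1 - \<theta>) * a1 * D z = real (n1 - 1) * (A1.V z - A1.B z) * d z"
      using A1.FOC[OF zt] by blast
    obtain a2 where a2: "DERIV A2.B z :> a2" "(1 - \<theta>) * a2 * D z = real (n2 - 1) * (A1.V z - A2.B z) * d z"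
      using A2.FOC[OF zt] by blast
    have "a1 \<noteq> a2"
    proof
      assume "a1 = a2"
      then have "real (n1 - 1) * ((A1.V z - A1.B z) * d z) = real (n2 - 1) * ((A1.V z - A1.B z) * d z)"
        using a1(2) a2(2) True by (simp add: mult.assoc)
      moreover have "(A1.V z - A1.B z) * d z \<noteq> 0" using A1.VB_pos[OF zt] z(2) by simp
      ultimately have "real (n1 - 1) = real (n2 - 1)" by simp
      then show False using n12 A1.n2 by simp
    qed
    have dd: "DERIV (\<lambda>s. A2.B s - A1.B s) z :> a2 - a1" by (intro DERIV_diff a1(1) a2(1))
    define r where "r = min \<delta> (min (z - a) (b - z))"
    have r: "0 < r" using \<delta> z unfolding r_def by auto
    have "\<not> (\<forall>y. \<bar>z - y\<bar> < r \<longrightarrow> A2.B z - A1.B z = A2.B y - A1.B y)"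
      using DERIV_local_const[OF dd r] \<open>a1 \<noteq> a2\<close> by auto
    then obtain y where y: "\<bar>z - y\<bar> < r" "A2.B z - A1.B z \<noteq> A2.B y - A1.B y" by blast
    have yab: "y \<in> {a<..<b}" using y(1) z unfolding r_def by auto
    then have "y \<in> {0..1}" using ab by auto
    moreover have "dist y z < \<delta>" using y(1) unfolding r_def dist_real_def by auto
    ultimately have "dist (d y) (d z) < d z" using \<delta> by blast
    then have "0 < d y" by (auto simp: dist_real_def)
    moreover have "A1.B y \<noteq> A2.B y" using y(2) True by auto
    ultimately show ?thesis using yab by blast
  qed
qed

lemma Vsame: "t \<in> {0..1} \<Longrightarrow> A1.V t = C1.V t"
proof (rule ccontr)
  fix t assume t: "t \<in> {0..1}" and ne: "A1.V t \<noteq> C1.V t"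
  define e where "e = \<bar>A1.V t - C1.V t\<bar> / 2"
  have e: "0 < e" using ne unfolding e_def by simp
  obtain \<delta>1 where \<delta>1: "\<delta>1 > 0" "\<forall>y\<in>{0..1}. dist y t < \<delta>1 \<longrightarrow> dist (A1.V y) (A1.V t) < e"
    using A1.V_cont t e unfolding continuous_on_iff by metis
  obtain \<delta>2 where \<delta>2: "\<delta>2 > 0" "\<forall>y\<in>{0..1}. dist y t < \<delta>2 \<longrightarrow> dist (C1.V y) (C1.V t) < e"
    using C1.V_cont t e unfolding continuous_on_iff by metis
  define \<delta> where "\<delta> = min \<delta>1 \<delta>2"
  define a where "a = max 0 (t - \<delta>/2)"
  define b where "b = min 1 (t + \<delta>/2)"
  have ab: "0 \<le> a" "a < b" "b \<le> 1" using t \<delta>1 \<delta>2 unfolding a_def b_def \<delta>_def by auto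
  obtain y where y: "y \<in> {a<..<b}" "0 < d y" "A1.B y \<noteq> A2.B y" using good_point[OF ab] by blast
  have yt: "y \<in> {0<..<1}" using y ab by auto
  have "A1.V y = C1.V y" using Vsame_pt[OF yt y(2,3)] .
  moreover have "dist y t < \<delta>1" "dist y t < \<delta>2" "y \<in> {0..1}"
    using y(1) yt unfolding a_def b_def \<delta>_def dist_real_def by auto
  ultimately have "dist (A1.V y) (A1.V t) < e" "dist (A1.V y) (C1.V t) < e"
    using \<delta>1 \<delta>2 by auto
  then have "\<bar>A1.V t - C1.V t\<bar> < 2 * e" by (auto simp: dist_real_def)
  then show False unfolding e_def by simp
qed


lemma Kid:
  assumes t: "t \<in> {0<..<1}"
  shows "(1 - \<theta>') * d t * D' t = (1 - \<theta>) * d' t * D t"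
proof -
  obtain a1 where a1: "DERIV A1.B t :> a1" "(1 - \<theta>) * a1 * D t = real (n1 - 1) * (A1.V t - A1.B t) * d t"
    using A1.FOC[OF t] by blast
  obtain c1 where c1: "DERIV C1.B t :> c1" "(1 - \<theta>') * c1 * D' t = real (n1 - 1) * (C1.V t - C1.B t) * d' t"
    using C1.FOC[OF t] by blast
  have "c1 = a1" using DERIV_unique[OF c1(1) derC1[OF t a1(1)]] .
  define w where "w = real (n1 - 1) * (A1.V t - A1.B t)"
  have wp: "w \<noteq> 0" using A1.VB_pos[OF t] A1.n2 unfolding w_def by simp
  have i: "(1 - \<theta>) * a1 * D t = w * d t" using a1(2) unfolding w_def by simp
  have ii: "(1 - \<theta>') * a1 * D' t = w * d' t"
    using c1(2) \<open>c1 = a1\<close> Bsame1[OF t] Vsame[of t] t unfolding w_def by simp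
  have "w * ((1 - \<theta>') * d t * D' t) = (1 - \<theta>') * D' t * (w * d t)" by (simp add: algebra_simps)
  also have "\<dots> = (1 - \<theta>') * D' t * ((1 - \<theta>) * a1 * D t)" using i by simp
  also have "\<dots> = (1 - \<theta>) * D t * ((1 - \<theta>') * a1 * D' t)" by (simp add: algebra_simps)
  also have "\<dots> = (1 - \<theta>) * D t * (w * d' t)" using ii by simp
  also have "\<dots> = w * ((1 - \<theta>) * d' t * D t)" by (simp add: algebra_simps)
  finally show ?thesis using wp by simp
qed

lemma theta_eq: "\<theta> = \<theta>'"
proof -
  have q: "((\<lambda>t. D t / t) \<longlongrightarrow> d 0) (at_right 0)"
  proof -
    have "(D has_real_derivative d 0) (at 0 within {0..1})" using A1.D_der by simp
    then have "((\<lambda>y. (D y - D 0) / (y - 0)) \<longlongrightarrow> d 0) (at 0 within {0..1})"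
      unfolding has_field_derivative_iff .
    then show ?thesis using A1.D0 at_within_Icc_at_right[of "0::real" 1] by simp
  qed
  have q': "((\<lambda>t. D' t / t) \<longlongrightarrow> d' 0) (at_right 0)"
  proof -
    have "(D' has_real_derivative d' 0) (at 0 within {0..1})" using C1.D_der by simp
    then have "((\<lambda>y. (D' y - D' 0) / (y - 0)) \<longlongrightarrow> d' 0) (at 0 within {0..1})"
      unfolding has_field_derivative_iff .
    then show ?thesis using C1.D0 at_within_Icc_at_right[of "0::real" 1] by simp
  qed
  have r: "(d \<longlongrightarrow> d 0) (at_right 0)"
  proof -
    have "(d \<longlongrightarrow> d 0) (at 0 within {0..1})" using A1.d_cont unfolding continuous_on_def by simp
    then show ?thesis using at_within_Icc_at_right[of "0::real" 1] by simp
  qed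
  have r': "(d' \<longlongrightarrow> d' 0) (at_right 0)"
  proof -
    have "(d' \<longlongrightarrow> d' 0) (at 0 within {0..1})" using C1.d_cont unfolding continuous_on_def by simp
    then show ?thesis using at_within_Icc_at_right[of "0::real" 1] by simp
  qed
  have L1: "((\<lambda>t. (1 - \<theta>') * d t * (D' t / t)) \<longlongrightarrow> (1 - \<theta>') * d 0 * d' 0) (at_right 0)"
    by (intro tendsto_mult tendsto_const r q')
  have L2: "((\<lambda>t. (1 - \<theta>) * d' t * (D t / t)) \<longlongrightarrow> (1 - \<theta>) * d' 0 * d 0) (at_right 0)"
    by (intro tendsto_mult tendsto_const r' q)
  have ev: "eventually (\<lambda>t. (1 - \<theta>') * d t * (D' t / t) = (1 - \<theta>) * d' t * (D t / t)) (at_right (0::real))"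
  proof (rule eventually_at_rightI[of 0 1])
    fix t :: real assume t: "t \<in> {0<..<1}"
    have "(1 - \<theta>') * d t * D' t / t = (1 - \<theta>) * d' t * D t / t" using Kid[OF t] by simp
    then show "(1 - \<theta>') * d t * (D' t / t) = (1 - \<theta>) * d' t * (D t / t)" by simp
  qed simp
  have L3: "((\<lambda>t. (1 - \<theta>) * d' t * (D t / t)) \<longlongrightarrow> (1 - \<theta>') * d 0 * d' 0) (at_right 0)"
    using Lim_transform_eventually[OF L1 ev] .
  have "(1 - \<theta>') * d 0 * d' 0 = (1 - \<theta>) * d' 0 * d 0"
    using tendsto_unique[OF _ L3 L2] by simp
  then have "(1 - \<theta>') * (d 0 * d' 0) = (1 - \<theta>) * (d 0 * d' 0)" by (simp add: algebra_simps)
  moreover have "d 0 * d' 0 \<noteq> 0" using A1.d0 C1.d0 by simp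
  ultimately show ?thesis by simp
qed

lemma D_eq: "t \<in> {0..1} \<Longrightarrow> D t = D' t"
proof -
  assume t: "t \<in> {0..1}"
  show "D t = D' t"
  proof (cases "t = 0")
    case True then show ?thesis using A1.D0 C1.D0 by simp
  next
    case False
    show ?thesis
    proof (cases "t = 1")
      case True then show ?thesis using A1.D1 C1.D1 by simp
    next
      case False2: False
      have ts: "0 < t" "t < 1" using t False False2 by auto
      have cont: "continuous_on {t..1} (\<lambda>x. D x / D' x)"
      proof (intro continuous_on_divide)
        show "continuous_on {t..1} D" using A1.D_cont by (rule continuous_on_subset) (use ts in auto)
        show "continuous_on {t..1} D'" using C1.D_cont by (rule continuous_on_subset) (use ts in auto)
        show "\<forall>x\<in>{t..1}. D' x \<noteq> 0"
        proof
          fix x assume "x \<in> {t..1}"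
          then have "0 < D' x" using C1.D_pos ts by auto
          then show "D' x \<noteq> 0" by simp
        qed
      qed
      have "(\<lambda>x. D x / D' x) 1 = (\<lambda>x. D x / D' x) t"
      proof (rule DERIV_isconst_end[OF ts(2) cont])
        fix x assume x: "t < x" "x < 1"
        then have xt: "x \<in> {0<..<1}" using ts by auto
        have "DERIV (\<lambda>x. D x / D' x) x :> (d x * D' x - D x * d' x) / (D' x * D' x)"
          by (intro DERIV_divide A1.D_der_at[OF xt] C1.D_der_at[OF xt]) (use C1.D_pos xt in force)
        moreover have "d x * D' x - D x * d' x = 0"
        proof -
          have "(1 - \<theta>) * (d x * D' x) = (1 - \<theta>) * (D x * d' x)"
            using Kid[OF xt] theta_eq by (simp add: algebra_simps)
          then show ?thesis using A1.th1 by simp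
        qed
        ultimately show "DERIV (\<lambda>x. D x / D' x) x :> 0" by simp
      qed
      then have "D t / D' t = 1" using A1.D1 C1.D1 by simp
      then show ?thesis using C1.D_pos[of t] ts by (simp add: field_simps)
    qed
  qed
qed

lemma F_eq: "F = F'"
proof
  fix v
  have lo: "lo = lo'" using Vsame[of 0] A1.V0 C1.V0 by simp
  have hi: "hi = hi'" using Vsame[of 1] A1.V1 C1.V1 by simp
  show "F v = F' v"
  proof (cases "v \<le> lo")
    case True then show ?thesis using A1.F_lo C1.F_lo lo by simp
  next
    case False
    show ?thesis
    proof (cases "hi \<le> v")
      case True then show ?thesis using A1.F_hi C1.F_hi hi by simp
    next
      case False2: False
      then have vI: "v \<in> {lo..hi}" using False by auto
      have Fv: "F v \<in> {0..1}" using A1.F_range[OF vI] .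
      have "C1.V (F v) = v" using Vsame[OF Fv] A1.VF[OF vI] by simp
      then show ?thesis using C1.FV[OF Fv] by simp
    qed
  qed
qed

end


theorem proposition3:
  fixes n1 n2 :: nat
    and vlo vhi vlo' vhi' \<theta> \<theta>' :: real
    and F0 D F0' D' \<beta>1 \<beta>2 \<beta>1' \<beta>2' :: "real \<Rightarrow> real"
  assumes "2 \<le> n1" and "n1 < n2"
    and "model_structure vlo vhi F0 D \<theta>"
    and "model_structure vlo' vhi' F0' D' \<theta>'"
    and "equilibrium vlo vhi F0 D \<theta> n1 \<beta>1"
    and "equilibrium vlo vhi F0 D \<theta> n2 \<beta>2"
    and "equilibrium vlo' vhi' F0' D' \<theta>' n1 \<beta>1'"
    and "equilibrium vlo' vhi' F0' D' \<theta>' n2 \<beta>2'"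
    and "bid_cdf vlo vhi F0 \<beta>1 = bid_cdf vlo' vhi' F0' \<beta>1'"
    and "bid_cdf vlo vhi F0 \<beta>2 = bid_cdf vlo' vhi' F0' \<beta>2'"
  shows "F0 = F0' \<and> (\<forall>\<gamma>\<in>{0..1}. D \<gamma> = D' \<gamma>) \<and> \<theta> = \<theta>'"
proof -
  have m1: "value_cdf vlo vhi F0" "distortion D" "0 \<le> \<theta>" "\<theta> < 1"
    using assms(3) unfolding model_structure_def by auto
  have m2: "value_cdf vlo' vhi' F0'" "distortion D'" "0 \<le> \<theta>'" "\<theta>' < 1"
    using assms(4) unfolding model_structure_def by auto
  obtain f where f: "vlo < vhi" "\<forall>v. v \<le> vlo \<longrightarrow> F0 v = 0" "\<forall>v. vhi \<le> v \<longrightarrow> F0 v = 1"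
    "\<forall>v\<in>{vlo..vhi}. 0 < f v \<and> (F0 has_real_derivative f v) (at v within {vlo..vhi})"
    using m1(1) unfolding value_cdf_def by blast
  obtain f' where f': "vlo' < vhi'" "\<forall>v. v \<le> vlo' \<longrightarrow> F0' v = 0" "\<forall>v. vhi' \<le> v \<longrightarrow> F0' v = 1"
    "\<forall>v\<in>{vlo'..vhi'}. 0 < f' v \<and> (F0' has_real_derivative f' v) (at v within {vlo'..vhi'})"
    using m2(1) unfolding value_cdf_def by blast
  obtain d where d: "strict_mono_on {0..1} D" "D 0 = 0" "D 1 = 1" "continuous_on {0..1} d"
    "\<forall>\<gamma>\<in>{0..1}. (D has_real_derivative d \<gamma>) (at \<gamma> within {0..1})" "0 < d 0"
    using m1(2) unfolding distortion_def by blast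
  obtain d' where d': "strict_mono_on {0..1} D'" "D' 0 = 0" "D' 1 = 1" "continuous_on {0..1} d'"
    "\<forall>\<gamma>\<in>{0..1}. (D' has_real_derivative d' \<gamma>) (at \<gamma> within {0..1})" "0 < d' 0"
    using m2(2) unfolding distortion_def by blast
  have vs1: "vstruct vlo vhi F0 f D d \<theta>"
    using f d m1 by (unfold_locales) auto
  have vs2: "vstruct vlo' vhi' F0' f' D' d' \<theta>'"
    using f' d' m2 by (unfold_locales) auto
  have "ident vlo vhi F0 f D d \<theta> n1 \<beta>1 n2 \<beta>2 vlo' vhi' F0' f' D' d' \<theta>' \<beta>1' \<beta>2'"
    unfolding ident_def ident_axioms_def veq_def veq_axioms_def
    using vs1 vs2 assms by auto
  then interpret I: ident vlo vhi F0 f D d \<theta> n1 \<beta>1 n2 \<beta>2 vlo' vhi' F0' f' D' d' \<theta>' \<beta>1' \<beta>2' .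
  show ?thesis using I.F_eq I.D_eq I.theta_eq by blast
qed

end
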